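(* Let $d\ge1$, $L>0$, $\alpha\in(0,1]$, $\mu\in(0,1]$, $R_\mu>0$. There exists a constant $M_{d,L,R_\mu}$ depending only on $d$, $L$ and $R_\mu$ such that every $f\in S_d(L,\alpha,\mu,R_\mu)$ satisfies $\|f\|_\infty\le M_{d,L,R_\mu}$.
   Context: Class $S_d(L,\alpha,\mu,R_\mu)$: the probability densities $f:[0,1]^d\to\mathbb{R}$ such that (A1) there exist open sets $M_1,\dots,M_l\subset[0,1]^d$ with $\bigcup_i\overline{M_i}=[0,1]^d$ and $|f(x)-f(y)|\le L\|x-y\|_2^\alpha$ for all $x,y\in M_i$, for each $i$; (A2) for every $x_0\in[0,1]^d$, $\limsup_{x\to x_0,\,x\in\bigcup_i M_i}f(x)=f(x_0)$; (A3) $\operatorname{reach}_\mu\left(\bigcup_{i=1}^l\partial M_i\right)\ge R_\mu$. $\mu$-reach: for compact $K\subset[0,1]^d$, $d_K(x)=\min_{y\in K}\|x-y\|_2$; for $x\notin K$, $\Gamma_K(x)=\{y\in K:\|x-y\|_2=d_K(x)\}$, $\Theta_K(x)$ is the center of the smallest ball enclosing $\Gamma_K(x)$, $\nabla_K(x)=(x-\Theta_K(x))/d_K(x)$, and $\operatorname{reach}_\mu(K)=\inf\{r:\inf_{d_K^{-1}(r)}\|\nabla_K\|_2<\mu\}$. *)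

theory Defs
  imports "HOL-Analysis.Analysis"
begin

text \<open>The unit cube [0,1]^d, with d = CARD('n).\<close>
definition unit_cube :: "(real^'n) set" where
  "unit_cube = {x. \<forall>i. 0 \<le> x $ i \<and> x $ i \<le> 1}"

definition nearest_set :: "(real^'n) set \<Rightarrow> real^'n \<Rightarrow> (real^'n) set" where
  "nearest_set K x = {y \<in> K. dist x y = infdist x K}"

definition encl_radius :: "(real^'n) set \<Rightarrow> real^'n \<Rightarrow> real" where
  "encl_radius S c = (SUP y\<in>S. dist c y)"

definition seb_center :: "(real^'n) set \<Rightarrow> real^'n" where
  "seb_center S = (THE c. \<forall>c'. encl_radius S c \<le> encl_radius S c')"

definition Theta_K :: "(real^'n) set \<Rightarrow> real^'n \<Rightarrow> real^'n" where
  "Theta_K K x = seb_center (nearest_set K x)"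

definition grad_K :: "(real^'n) set \<Rightarrow> real^'n \<Rightarrow> real^'n" where
  "grad_K K x = (1 / infdist x K) *\<^sub>R (x - Theta_K K x)"

text \<open>mu-reach: inf { r > 0 : inf over the level set d_K^{-1}(r) of |nabla_K| < mu },
  valued in the extended reals (infimum of the empty set = +infinity).\<close>
definition mu_reach :: "real \<Rightarrow> (real^'n) set \<Rightarrow> ereal" where
  "mu_reach \<mu> K = Inf {ereal r | r. r > 0 \<and>
      (INF x\<in>{x. infdist x K = r}. norm (grad_K K x)) < \<mu>}"

definition S_class :: "real \<Rightarrow> real \<Rightarrow> real \<Rightarrow> real \<Rightarrow> (real^'n \<Rightarrow> real) set" where
  "S_class L \<alpha> \<mu> R = {f.
     \<comment> \<open>probability density on the unit cube\<close>
     (\<forall>x\<in>unit_cube. 0 \<le> f x) \<and> (f has_integral 1) unit_cube \<and>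
     (\<exists>Ms :: (real^'n) set set. finite Ms \<and>
        (\<forall>M\<in>Ms. open M \<and> M \<subseteq> unit_cube) \<and>
        \<Union>(closure ` Ms) = unit_cube \<and>
        \<comment> \<open>(A1)\<close>
        (\<forall>M\<in>Ms. \<forall>x\<in>M. \<forall>y\<in>M. \<bar>f x - f y\<bar> \<le> L * norm (x - y) powr \<alpha>) \<and>
        \<comment> \<open>(A2)\<close>
        (\<forall>x0\<in>unit_cube. Limsup (at x0 within \<Union>Ms) (\<lambda>x. ereal (f x)) = ereal (f x0)) \<and>
        \<comment> \<open>(A3)\<close>
        mu_reach \<mu> (\<Union>(frontier ` Ms)) \<ge> ereal R)}"

end

theory Submission
  imports Defs
begin

lemma infdist_attained:
  fixes x :: "'a::heine_borel"
  assumes "closed K" "K \<noteq> {}"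
  shows "\<exists>z\<in>K. infdist x K = dist x z"
proof -
  obtain z where z: "z \<in> K" "\<And>y. y \<in> K \<Longrightarrow> dist x z \<le> dist x y"
    using distance_attains_inf[OF assms] by blast
  have "infdist x K = dist x z"
    unfolding infdist_def using z assms(2) by (auto intro!: antisym cINF_lower cINF_greatest)
  then show ?thesis using z by blast
qed

lemma ip_lemma:
  fixes x y c :: "real^'n"
  assumes "dist c y \<le> dist x y"
  shows "(y - x) \<bullet> (c - x) \<ge> (norm (c - x))^2 / 2"
proof -
  have "(norm (c - y))^2 \<le> (norm (x - y))^2" using assms by (simp add: dist_norm power_mono)
  moreover have "c - y = (x - y) + (c - x)" by simp
  ultimately have "(norm ((x - y) + (c - x)))^2 \<le> (norm (x - y))^2" by metis
  then show ?thesis apply (simp add: power2_norm_eq_inner inner_simps algebra_simps inner_commute) apply (simp add: field_simps) done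
qed

lemma dist_shift_sq:
  fixes x z v :: "real^'n"
  shows "(norm ((x - t *\<^sub>R v) - z))^2 = (norm (x - z))^2 + 2 * t * ((z - x) \<bullet> v) + t^2 * (norm v)^2"
  unfolding power2_norm_eq_inner by (simp add: inner_simps algebra_simps inner_commute power2_eq_square)

lemma grad_zero_at_local_max:
  fixes K :: "(real^'n) set" and x :: "real^'n"
  assumes K: "compact K" "K \<noteq> {}" and rpos: "infdist x K > 0"
    and e: "e > 0" and loc: "\<And>z. dist x z < e \<Longrightarrow> infdist z K \<le> infdist x K"
  shows "grad_K K x = 0"
proof -
  define r where "r = infdist x K"
  define G where "G = nearest_set K x"
  have clK: "closed K" using K compact_imp_closed by blast
  have GK: "G \<subseteq> K" and Gd: "\<And>y. y \<in> G \<Longrightarrow> dist x y = r"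
    unfolding G_def nearest_set_def r_def by auto
  have Gne: "G \<noteq> {}"
    using infdist_attained[OF clK K(2), of x] unfolding G_def nearest_set_def by auto
  have far: "\<exists>y\<in>G. dist c y > r" if cx: "c \<noteq> x" for c
  proof (rule ccontr)
    assume "\<not> (\<exists>y\<in>G. r < dist c y)"
    then have le: "\<And>y. y \<in> G \<Longrightarrow> dist c y \<le> dist x y" using Gd by force
    define v where "v = c - x"
    define \<delta> where "\<delta> = (norm v)^2 / 2"
    have vpos: "norm v > 0" using cx unfolding v_def by simp
    have dpos: "\<delta> > 0" using vpos unfolding \<delta>_def by simp
    have ip: "(y - x) \<bullet> v \<ge> \<delta>" if "y \<in> G" for y
      using ip_lemma[OF le[OF that]] unfolding v_def \<delta>_def by simp
    define h where "h z = max (dist x z - r) ((z - x) \<bullet> v)" for z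
    have hc: "continuous_on K h" unfolding h_def by (intro continuous_intros)
    have hpos: "h z > 0" if "z \<in> K" for z
    proof (cases "dist x z = r")
      case True
      then have "z \<in> G" using that unfolding G_def nearest_set_def r_def by auto
      then show ?thesis using ip dpos unfolding h_def by fastforce
    next
      case False
      moreover have "r \<le> dist x z" using infdist_le[OF that] unfolding r_def .
      ultimately show ?thesis unfolding h_def by auto
    qed
    obtain z0 where z0: "z0 \<in> K" "\<And>z. z \<in> K \<Longrightarrow> h z0 \<le> h z"
      using continuous_attains_inf[OF K hc] by blast
    define \<eta> where "\<eta> = h z0"
    have eta: "\<eta> > 0" using hpos z0 unfolding \<eta>_def by blast
    define t where "t = min e \<eta> / (2 * norm v)"
    have tpos: "t > 0" using e eta vpos unfolding t_def by simp
    have tv: "t * norm v = min e \<eta> / 2" unfolding t_def using vpos by simp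
    define xt where "xt = x - t *\<^sub>R v"
    have "dist x xt = t * norm v" unfolding xt_def dist_norm using tpos by simp
    then have "dist x xt < e" using tv e eta by linarith
    then have up: "infdist xt K \<le> r" using loc unfolding r_def by blast
    obtain z where z: "z \<in> K" "infdist xt K = dist xt z"
      using infdist_attained[OF clK K(2)] by blast
    have "dist xt z > r"
    proof (cases "dist x z - r \<ge> \<eta>")
      case True
      have "dist x z \<le> dist x xt + dist xt z" by (rule dist_triangle)
      then show ?thesis using True \<open>dist x xt = t * norm v\<close> tv eta e by linarith
    next
      case False
      then have "(z - x) \<bullet> v \<ge> \<eta>" using z0(2)[OF z(1)] unfolding \<eta>_def h_def by auto
      have r0: "r \<ge> 0" unfolding r_def by (rule infdist_nonneg)
      have "r \<le> dist x z" using infdist_le[OF z(1)] unfolding r_def .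
      then have "r^2 \<le> (norm (x - z))^2" using r0 by (simp add: dist_norm power_mono)
      moreover have "(norm (xt - z))^2 = (norm (x - z))^2 + 2 * t * ((z - x) \<bullet> v) + t^2 * (norm v)^2"
        unfolding xt_def by (rule dist_shift_sq)
      moreover have "2 * t * ((z - x) \<bullet> v) > 0" using tpos eta \<open>(z - x) \<bullet> v \<ge> \<eta>\<close> by simp
      moreover have "t^2 * (norm v)^2 \<ge> 0" by simp
      ultimately have "r^2 < (norm (xt - z))^2" by linarith
      then show ?thesis unfolding dist_norm using r0 by (simp add: power_less_imp_less_base)
    qed
    then show False using up z by linarith
  qed
  have bdd: "bdd_above ((\<lambda>y. dist c y) ` G)" for c
  proof (rule bdd_aboveI2)
    fix y assume "y \<in> G"
    then show "dist c y \<le> dist c x + r" using dist_triangle[of c y x] Gd by (simp add: dist_commute)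
  qed
  have ex: "encl_radius G x = r"
  proof -
    have "encl_radius G x = (SUP y\<in>G. r)" unfolding encl_radius_def using Gd by (intro SUP_cong) auto
    then show ?thesis using Gne by simp
  qed
  have gt: "encl_radius G c > r" if cne: "c \<noteq> x" for c
  proof -
    obtain y where "y \<in> G" "dist c y > r" using far cne by blast
    moreover have "dist c y \<le> encl_radius G c" unfolding encl_radius_def
      by (rule cSUP_upper[OF \<open>y \<in> G\<close> bdd])
    ultimately show ?thesis by linarith
  qed
  have "seb_center G = x" unfolding seb_center_def
  proof (rule the_equality)
    show "\<forall>c'. encl_radius G x \<le> encl_radius G c'"
      using ex gt by (metis order.refl less_imp_le)
  next
    fix c assume "\<forall>c'. encl_radius G c \<le> encl_radius G c'"
    then have "encl_radius G c \<le> r" using ex by metis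
    then show "c = x" using gt by fastforce
  qed
  then show ?thesis unfolding grad_K_def Theta_K_def G_def by simp
qed

lemma cube_norm:
  fixes x :: "real^'n"
  assumes "x \<in> unit_cube"
  shows "norm x \<le> real CARD('n)"
proof -
  have "norm x \<le> (\<Sum>i\<in>UNIV. \<bar>x $ i\<bar>)" by (rule norm_le_l1_cart)
  also have "\<dots> \<le> (\<Sum>i\<in>(UNIV::'n set). 1)"
    using assms unfolding unit_cube_def by (intro sum_mono) auto
  finally show ?thesis by simp
qed

lemma bounded_cube: "bounded (unit_cube :: (real^'n) set)"
  unfolding bounded_iff using cube_norm by blast

lemma interior_frontier_open:
  fixes M :: "(real^'n) set"
  assumes "open M"
  shows "interior (frontier M) = {}"
proof -
  have "interior (frontier M) \<inter> M = {}"
    using interior_subset[of "frontier M"] assms by (auto simp: frontier_def interior_open)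
  then have "interior (frontier M) \<inter> closure M = {}"
    using open_Int_closure_eq_empty[of "interior (frontier M)" M] by simp
  moreover have "interior (frontier M) \<subseteq> closure M"
    using interior_subset[of "frontier M"] by (auto simp: frontier_def)
  ultimately show ?thesis by blast
qed

lemma interior_Union_nowhere:
  fixes F :: "(real^'n) set set"
  assumes "finite F" "\<forall>S\<in>F. closed S \<and> interior S = {}"
  shows "interior (\<Union>F) = {}"
  using assms
proof (induction F rule: finite_induct)
  case empty
  then show ?case by simp
next
  case (insert S F)
  then have "interior (S \<union> \<Union>F) = interior S"
    by (intro interior_closed_Un_empty_interior) auto
  then show ?case using insert by simp
qed

lemma ball_in_region:
  fixes Ms :: "(real^'n) set set"
  assumes fin: "finite Ms" and op: "\<forall>M\<in>Ms. open M \<and> M \<subseteq> unit_cube"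
    and reach: "mu_reach \<mu> (\<Union>(frontier ` Ms)) \<ge> ereal R" and mu: "\<mu> > 0" and Rpos: "R > 0"
    and M: "M \<in> Ms" "M \<noteq> {}"
  shows "\<exists>c. ball c R \<subseteq> M"
proof -
  define K where "K = \<Union>(frontier ` Ms)"
  have bM: "bounded M'" if "M' \<in> Ms" for M'
    using op that bounded_subset[OF bounded_cube] by blast
  have cK: "compact K" unfolding K_def
  proof (rule compact_Union)
    show "finite (frontier ` Ms)" using fin by simp
  next
    fix T assume "T \<in> frontier ` Ms"
    then obtain M' where "M' \<in> Ms" "T = frontier M'" by blast
    moreover have "bounded (frontier M')"
      using bM[OF \<open>M' \<in> Ms\<close>] bounded_closure bounded_subset by (metis Diff_subset frontier_def)
    ultimately show "compact T" by (simp add: compact_eq_bounded_closed frontier_closed)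
  qed
  have clK: "closed K" using cK compact_imp_closed by blast
  have iK: "interior K = {}" unfolding K_def
    using fin op by (intro interior_Union_nowhere) (auto simp: frontier_closed interior_frontier_open)
  have oM: "open M" using op M by blast
  have "M \<noteq> UNIV" using bM[OF M(1)] by auto
  then have "frontier M \<noteq> {}" using M(2) frontier_eq_empty by blast
  then have Kne: "K \<noteq> {}" unfolding K_def using M(1) by blast
  obtain p where p: "p \<in> M" "p \<notin> K"
  proof -
    have "\<not> M \<subseteq> K" using interior_maximal[OF _ oM, of K] iK M(2) by blast
    then show ?thesis using that by blast
  qed
  define d where "d z = infdist z K" for z
  have dc: "continuous_on (closure M) d" unfolding d_def by (intro continuous_intros)
  have cM: "compact (closure M)" using bM[OF M(1)] by (simp add: compact_closure)
  obtain xs where xs: "xs \<in> closure M" "\<And>z. z \<in> closure M \<Longrightarrow> d z \<le> d xs"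
    using continuous_attains_sup[OF cM _ dc] M(2) by auto
  have dp: "d p > 0" unfolding d_def by (rule infdist_pos_not_in_closed[OF clK Kne p(2)])
  have dxs: "d xs > 0" using xs(2)[of p] p(1) closure_subset[of M] dp by force
  have xsM: "xs \<in> M"
  proof (rule ccontr)
    assume "xs \<notin> M"
    then have "xs \<in> frontier M" using xs(1) oM by (simp add: frontier_def interior_open)
    then have "xs \<in> K" unfolding K_def using M(1) by blast
    then show False using dxs unfolding d_def by simp
  qed
  obtain e where e: "e > 0" "ball xs e \<subseteq> M" using oM xsM open_contains_ball by blast
  have g0: "grad_K K xs = 0"
  proof (rule grad_zero_at_local_max[OF cK Kne _ e(1)])
    show "infdist xs K > 0" using dxs unfolding d_def .
    fix z assume "dist xs z < e"
    then have "z \<in> closure M" using e(2) closure_subset by (auto simp: ball_def)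
    then show "infdist z K \<le> infdist xs K" using xs(2) unfolding d_def by blast
  qed
  have "(INF x\<in>{x. infdist x K = d xs}. norm (grad_K K x)) \<le> norm (grad_K K xs)"
    by (rule cINF_lower) (auto simp: d_def intro: bdd_belowI2[where m=0])
  then have "(INF x\<in>{x. infdist x K = d xs}. norm (grad_K K x)) < \<mu>" using g0 mu by simp
  then have "ereal (d xs) \<in> {ereal r | r. r > 0 \<and>
      (INF x\<in>{x. infdist x K = r}. norm (grad_K K x)) < \<mu>}" using dxs by blast
  then have "mu_reach \<mu> K \<le> ereal (d xs)" unfolding mu_reach_def by (rule Inf_lower)
  then have Rd: "R \<le> d xs" using reach unfolding K_def by (metis ereal_less_eq(3) order_trans)
  have "ball xs R \<subseteq> M"
  proof (rule ccontr)
    assume "\<not> ball xs R \<subseteq> M"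
    then have "ball xs R \<inter> frontier M \<noteq> {}"
      proof -
      have "xs \<in> ball xs R \<inter> M" using xsM Rpos by simp
      moreover have "ball xs R - M \<noteq> {}" using \<open>\<not> ball xs R \<subseteq> M\<close> by blast
      ultimately show ?thesis using connected_Int_frontier[of "ball xs R" M] by blast
    qed
    then obtain z where z: "z \<in> ball xs R" "z \<in> frontier M" by blast
    then have "z \<in> K" unfolding K_def using M(1) by blast
    then have "d xs \<le> dist xs z" unfolding d_def by (rule infdist_le)
    then show False using z(1) Rd by simp
  qed
  then show ?thesis by blast
qed

lemma powr_bound:
  fixes t a :: real
  assumes "0 \<le> t" "0 < a" "a \<le> 1"
  shows "t powr a \<le> 1 + t"
proof (cases "t \<le> 1")
  case True
  then have "t powr a \<le> 1" using assms by (intro powr_le1) auto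
  then show ?thesis using assms by linarith
next
  case False
  then have "t powr a \<le> t powr 1" using assms by (intro powr_mono) auto
  then show ?thesis using False by simp
qed

lemma ball_integral:
  fixes c :: "real^'n"
  shows "((\<lambda>x. a) has_integral a * measure lborel (ball c R)) (ball c R)"
proof -
  have "((\<lambda>x. 1::real) has_integral measure lborel (ball c R)) (ball c R)"
    by (rule has_integral_measure_lborel) (auto intro: emeasure_lborel_ball_finite[unfolded infinity_ennreal_def])
  from has_integral_mult_right[OF this, of a] show ?thesis by simp
qed

lemma region_bound:
  fixes f :: "real^'n \<Rightarrow> real" and M :: "(real^'n) set"
  assumes nonneg: "\<forall>x\<in>unit_cube. 0 \<le> f x" and int: "(f has_integral 1) unit_cube"
    and MC: "M \<subseteq> unit_cube" and ball: "ball c R \<subseteq> M" and Rpos: "R > 0"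
    and hol: "\<forall>x\<in>M. \<forall>y\<in>M. \<bar>f x - f y\<bar> \<le> L * norm (x - y) powr \<alpha>"
    and L: "L > 0" and al: "0 < \<alpha>" "\<alpha> \<le> 1"
    and x: "x \<in> M"
  shows "f x \<le> L * (1 + 2 * real CARD('n)) + 1 / measure lborel (ball (0::real^'n) R)"
proof -
  define C where "C = L * (1 + 2 * real CARD('n))"
  define V where "V = measure lborel (ball (0::real^'n) R)"
  have V: "measure lborel (ball c R) = V" unfolding V_def
    using content_ball_conv_unit_ball[of R c] content_ball_conv_unit_ball[of R "0::real^'n"] Rpos by simp
  have Vpos: "V > 0" unfolding V_def using Rpos by simp
  have lowy: "f y \<ge> f x - C" if y: "y \<in> ball c R" for y :: "real^'n"
  proof -
    have yM: "y \<in> M" using y ball by blast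
    have "norm (x - y) \<le> norm x + norm y" by (rule norm_triangle_ineq4)
    also have "\<dots> \<le> 2 * real CARD('n)" using cube_norm[of x] cube_norm[of y] x yM MC by force
    finally have n: "norm (x - y) \<le> 2 * real CARD('n)" .
    have "norm (x - y) powr \<alpha> \<le> 1 + norm (x - y)" using powr_bound al by simp
    then have "norm (x - y) powr \<alpha> \<le> 1 + 2 * real CARD('n)" using n by linarith
    then have "L * norm (x - y) powr \<alpha> \<le> C" unfolding C_def using L
      by (intro mult_left_mono) auto
    moreover have "\<bar>f x - f y\<bar> \<le> L * norm (x - y) powr \<alpha>" using hol x yM by blast
    ultimately show ?thesis by linarith
  qed
  show ?thesis
  proof (cases "f x \<le> C")
    case True
    moreover have "1 / V > 0" using Vpos by simp
    ultimately show ?thesis unfolding C_def V_def by linarith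
  next
    case False
    define a where "a = f x - C"
    have apos: "a > 0" using False unfolding a_def by simp
    have bc: "ball c R \<subseteq> unit_cube" using ball MC by blast
    have gi: "((\<lambda>y. if y \<in> ball c R then a else 0) has_integral a * V) unit_cube"
      using has_integral_restrict[OF bc, of "\<lambda>_. a"] ball_integral[of a c R] V by simp
    have "a * V \<le> 1"
    proof (rule has_integral_le[OF gi int])
      fix y :: "real^'n" assume "y \<in> unit_cube"
      then show "(if y \<in> ball c R then a else 0) \<le> f y"
        using lowy nonneg unfolding a_def by auto
    qed
    then have "a \<le> 1 / V" using Vpos by (simp add: field_simps)
    then show ?thesis unfolding a_def C_def V_def by simp
  qed
qed

theorem lemma1:
  fixes L R :: real
  assumes "L > 0" and "R > 0"
  shows "\<exists>Mc::real. \<forall>(\<alpha>::real) (\<mu>::real) (f::real^'n \<Rightarrow> real).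
           0 < \<alpha> \<and> \<alpha> \<le> 1 \<and> 0 < \<mu> \<and> \<mu> \<le> 1 \<and> f \<in> S_class L \<alpha> \<mu> R
           \<longrightarrow> (\<forall>x\<in>unit_cube. \<bar>f x\<bar> \<le> Mc)"
proof (intro exI allI impI ballI)
  define B where "B = L * (1 + 2 * real CARD('n)) + 1 / measure lborel (ball (0::real^'n) R)"
  fix \<alpha> \<mu> :: real and f :: "real^'n \<Rightarrow> real" and x0 :: "real^'n"
  assume H: "0 < \<alpha> \<and> \<alpha> \<le> 1 \<and> 0 < \<mu> \<and> \<mu> \<le> 1 \<and> f \<in> S_class L \<alpha> \<mu> R"
    and x0: "x0 \<in> unit_cube"
  then have al: "0 < \<alpha>" "\<alpha> \<le> 1" and mu: "0 < \<mu>" and fS: "f \<in> S_class L \<alpha> \<mu> R" by auto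
  from fS obtain Ms :: "(real^'n) set set" where
    nonneg: "\<forall>x\<in>unit_cube. 0 \<le> f x" and int: "(f has_integral 1) unit_cube"
    and fin: "finite Ms" and op: "\<forall>M\<in>Ms. open M \<and> M \<subseteq> unit_cube"
    and hol: "\<forall>M\<in>Ms. \<forall>x\<in>M. \<forall>y\<in>M. \<bar>f x - f y\<bar> \<le> L * norm (x - y) powr \<alpha>"
    and A2: "\<forall>x0\<in>unit_cube. Limsup (at x0 within \<Union>Ms) (\<lambda>x. ereal (f x)) = ereal (f x0)"
    and A3: "mu_reach \<mu> (\<Union>(frontier ` Ms)) \<ge> ereal R"
    unfolding S_class_def by blast
  have bnd: "f x \<le> B" if xU: "x \<in> \<Union>Ms" for x
  proof -
    obtain M where M: "M \<in> Ms" "x \<in> M" using xU by blast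
    then obtain c where c: "ball c R \<subseteq> M"
      using ball_in_region[OF fin op A3 mu assms(2) M(1)] by blast
    have MC: "M \<subseteq> unit_cube" using op M(1) by blast
    have hM: "\<forall>x\<in>M. \<forall>y\<in>M. \<bar>f x - f y\<bar> \<le> L * norm (x - y) powr \<alpha>" using hol M(1) by blast
    show ?thesis unfolding B_def
      by (rule region_bound[OF nonneg int MC c assms(2) hM assms(1) al M(2)])
  qed
  have "Limsup (at x0 within \<Union>Ms) (\<lambda>x. ereal (f x)) \<le> ereal B"
    by (rule Limsup_bounded) (auto simp: eventually_at_filter bnd)
  then have "f x0 \<le> B" using A2 x0 by simp
  then show "\<bar>f x0\<bar> \<le> B" using nonneg x0 by simp
qed

end
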